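(* Let $N\ge 2$ be an integer, $\omega_0>0$, $f_0>0$, $\sigma=f_0/\omega_0^2$. Let $x_0(t),\dots,x_{N-1}(t)$ solve \[ \ddot x_0=0,\qquad \ddot x_k=\omega_0^2\,(x_{k-1}-2x_k+x_{k+1})\ (1\le k\le N-2),\qquad \ddot x_{N-1}=\omega_0^2\,(x_{N-2}-x_{N-1})+f_0, \] with $x_k(0)=0$, $\dot x_k(0)=0$ for all $k$. Then for $n=0,\dots,N-1$ and $t\ge 0$, \[ x_n(t)=\sigma\left[n-\frac{1}{2N-1}\sum_{m=1}^{2N-2}\gamma_{m,N,n}\cos(\omega_m t)\right], \] where \[ \gamma_{m,N,n}=\frac{1}{\sin^2\frac{\pi m}{4N-2}}\,\sin\frac{\pi m}{2}\,\cos\frac{\pi m}{4N-2}\,\sin\frac{\pi nm}{2N-1},\qquad \omega_m=2\omega_0\sin\frac{\pi m}{4N-2}. \] *)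

theory Defs
  imports Complex_Main
begin

definition chain_gamma :: "nat \<Rightarrow> nat \<Rightarrow> nat \<Rightarrow> real" where
  "chain_gamma m N n =
     (1 / (sin (pi * real m / (4 * real N - 2)))\<^sup>2) * sin (pi * real m / 2)
     * cos (pi * real m / (4 * real N - 2)) * sin (pi * real n * real m / (2 * real N - 1))"

definition chain_omega :: "real \<Rightarrow> nat \<Rightarrow> nat \<Rightarrow> real" where
  "chain_omega \<omega>\<^sub>0 N m = 2 * \<omega>\<^sub>0 * sin (pi * real m / (4 * real N - 2))"

end

theory Submission
  imports Defs "HOL-Analysis.Analysis"
begin


lemma dirichlet:
  fixes x :: real
  shows "2 * sin (x/2) * (\<Sum>m=1..L. cos (real m * x)) = sin ((real L + 1/2) * x) - sin (x/2)"
proof (induction L)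
  case 0 then show ?case by simp
next
  case (Suc L)
  have e1: "(real (Suc L) + 1/2) * x = real (Suc L) * x + x/2" by (simp add: algebra_simps)
  have e2: "(real L + 1/2) * x = real (Suc L) * x - x/2" by (simp add: algebra_simps)
  have "2 * sin (x/2) * (\<Sum>m=1..Suc L. cos (real m * x))
      = 2 * sin (x/2) * (\<Sum>m=1..L. cos (real m * x)) + 2 * sin (x/2) * cos (real (Suc L) * x)"
    by (simp add: algebra_simps)
  also have "\<dots> = sin ((real (Suc L) + 1/2) * x) - sin (x/2)"
  proof -
    have "sin (real (Suc L) * x + x/2) - sin (real (Suc L) * x - x/2) = 2 * sin (x/2) * cos (real (Suc L) * x)"
      by (simp add: sin_add sin_diff)
    then show ?thesis using Suc unfolding e1 e2 by simp
  qed
  finally show ?case .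
qed

lemma cos_sum_C:
  fixes K j :: nat
  assumes "1 \<le> j" "j \<le> K"
  shows "(\<Sum>m=1..K-1. cos (real m * (real j * pi / real K))) = - (1 + (-1)^j) / 2"
proof -
  define x where "x = real j * pi / real K"
  have K: "K \<ge> 1" using assms by simp
  have pos: "0 < x/2" using assms unfolding x_def by (simp add: field_simps)
  have le: "x/2 \<le> pi/2" using assms unfolding x_def by (simp add: field_simps)
  have s: "sin (x/2) > 0" using pos le by (intro sin_gt_zero) auto
  have "(real (K-1) + 1/2) * x = real j * pi - x/2"
    using K unfolding x_def by (simp add: of_nat_diff field_simps)
  hence "sin ((real (K-1) + 1/2) * x) = - ((-1)^j * sin (x/2))"
    by (simp add: sin_diff sin_npi cos_npi)
  then have "2 * sin (x/2) * (\<Sum>m=1..K-1. cos (real m * x)) = - (1 + (-1)^j) * sin (x/2)"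
    using dirichlet[of x "K-1"] by (simp add: algebra_simps)
  then have "sin (x/2) * (2 * (\<Sum>m=1..K-1. cos (real m * x)) + (1 + (-1)^j)) = 0"
    by (simp add: algebra_simps)
  then have "2 * (\<Sum>m=1..K-1. cos (real m * x)) + (1 + (-1)^j) = 0" using s by simp
  then show ?thesis unfolding x_def[symmetric] by simp
qed

lemma prod_to_sum3:
  fixes A B C :: real
  shows "sin A * cos B * sin C = (cos (A-C-B) + cos (A-C+B) - cos (A+C-B) - cos (A+C+B)) / 4"
  by (simp add: cos_add cos_diff sin_add sin_diff algebra_simps)

definition CC :: "nat \<Rightarrow> nat \<Rightarrow> real" where
  "CC K j = (\<Sum>m=1..K-1. cos (real m * (real j * pi / real K)))"

lemma CC_pair:
  assumes "1 \<le> j" "j + 1 \<le> K"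
  shows "CC K j + CC K (j+1) = -1"
  using cos_sum_C[of j K] cos_sum_C[of "j+1" K] assms unfolding CC_def by simp

lemma CC_0: "K \<ge> 1 \<Longrightarrow> CC K 0 = real K - 1"
  unfolding CC_def by simp

lemma CC_1: "K \<ge> 1 \<Longrightarrow> CC K 1 = 0"
  using cos_sum_C[of 1 K] unfolding CC_def by simp

definition TT :: "nat \<Rightarrow> nat \<Rightarrow> real" where
  "TT N n = (\<Sum>m=1..2*N-2. sin (pi * real m / 2) * cos (pi * real m / (4 * real N - 2))
       * sin (pi * real n * real m / (2 * real N - 1)))"

lemma TT_CC:
  assumes N: "N \<ge> 2" and n: "n \<le> N - 1"
  shows "TT N n = (CC (2*N-1) (N-1-n) + CC (2*N-1) (N-n) - CC (2*N-1) (N-1+n) - CC (2*N-1) (N+n)) / 4"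
proof -
  define K where "K = 2*N-1"
  have Kr: "real K = 2 * real N - 1" using N unfolding K_def by (simp add: of_nat_diff)
  have K1: "2*N-2 = K - 1" unfolding K_def by simp
  define a where "a = N - 1 - n"
  have Na: "N - 1 - n = a" "N - n = a + 1" "N - 1 + n = a + 2*n" "N + n = a + 2*n + 1" "K = 2*a + 2*n + 1"
    using N n unfolding a_def K_def by auto
  have tm: "sin (pi * real m / 2) * cos (pi * real m / (4 * real N - 2))
       * sin (pi * real n * real m / (2 * real N - 1))
     = (cos (real m * (real a * pi / real K)) + cos (real m * (real (a+1) * pi / real K))
        - cos (real m * (real (a+2*n) * pi / real K)) - cos (real m * (real (a+2*n+1) * pi / real K))) / 4"
    for m
  proof -
    define h where "h = pi * real m / (2 * real K)"
    have Kpos: "real K > 0" using N Kr by simp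
    have e1: "pi * real m / 2 = (2*real a + 2*real n + 1) * h"
      using Kpos unfolding h_def by (simp add: Na(5) field_simps)
    have e2: "pi * real m / (4 * real N - 2) = h" unfolding h_def Kr by (simp add: field_simps)
    have e3: "pi * real n * real m / (2 * real N - 1) = 2 * real n * h"
      unfolding h_def Kr using Kpos Kr by (simp add: field_simps)
    have f: "\<And>j. real m * (real j * pi / real K) = 2 * real j * h"
      unfolding h_def using Kpos by (simp add: field_simps)
    show ?thesis unfolding e1 e2 e3 f prod_to_sum3
      by (simp add: algebra_simps)
  qed
  show ?thesis unfolding TT_def CC_def tm K_def[symmetric] K1 Na sum_subtractf[symmetric]
    sum.distrib[symmetric] sum_divide_distrib[symmetric] by simp
qed

lemma TT_mid:
  assumes N: "N \<ge> 2" and n: "1 \<le> n" "n \<le> N - 2"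
  shows "TT N n = 0"
proof -
  have "CC (2*N-1) (N-1-n) + CC (2*N-1) (N-1-n+1) = -1" using N n by (intro CC_pair) auto
  moreover have "CC (2*N-1) (N-1+n) + CC (2*N-1) (N-1+n+1) = -1" using N n by (intro CC_pair) auto
  moreover have "N-1-n+1 = N-n" "N-1+n+1 = N+n" using N n by auto
  moreover have "TT N n = (CC (2*N-1) (N-1-n) + CC (2*N-1) (N-n) - CC (2*N-1) (N-1+n) - CC (2*N-1) (N+n)) / 4"
    using N n by (intro TT_CC) auto
  ultimately show ?thesis by simp
qed

lemma TT_last:
  assumes N: "N \<ge> 2"
  shows "TT N (N-1) = (2 * real N - 1) / 4"
proof -
  have "CC (2*N-1) (N-1+(N-1)) + CC (2*N-1) (N-1+(N-1)+1) = -1" using N by (intro CC_pair) auto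
  moreover have "N-1+(N-1)+1 = N+(N-1)" using N by auto
  moreover have "CC (2*N-1) 0 = 2 * real N - 2" using CC_0[of "2*N-1"] N by (simp add: of_nat_diff)
  moreover have "CC (2*N-1) 1 = 0" using CC_1[of "2*N-1"] N by simp
  moreover have "N - (N-1) = 1" using N by simp
  ultimately show ?thesis using TT_CC[of N "N-1"] N by simp
qed

lemma gamma_eq:
  "chain_gamma m N n = (1 / (sin (pi * real m / (4 * real N - 2)))\<^sup>2 * sin (pi * real m / 2)
     * cos (pi * real m / (4 * real N - 2))) * sin (real n * (pi * real m / (2 * real N - 1)))"
  unfolding chain_gamma_def by (simp add: field_simps)

lemma sin_h_nz:
  assumes N: "N \<ge> 2" and m: "1 \<le> m" "m \<le> 2*N-2"
  shows "sin (pi * real m / (4 * real N - 2)) \<noteq> 0"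
proof -
  have d: "4 * real N - 2 > 0" using N by simp
  have "0 < pi * real m / (4 * real N - 2)" using m d by simp
  moreover have "pi * real m / (4 * real N - 2) < pi"
  proof -
    have "real m < 4 * real N - 2" using m N by linarith
    then have "pi * real m < pi * (4 * real N - 2)" by simp
    then show ?thesis using d by (simp add: field_simps)
  qed
  ultimately show ?thesis using sin_gt_zero by force
qed

lemma gamma_rec:
  assumes N: "N \<ge> 2" and m: "1 \<le> m" "m \<le> 2*N-2" and n: "1 \<le> n"
  shows "chain_gamma m N (n+1) - 2 * chain_gamma m N n + chain_gamma m N (n-1)
    = -4 * (sin (pi * real m / 2) * cos (pi * real m / (4 * real N - 2))
       * sin (pi * real n * real m / (2 * real N - 1)))"
proof -
  define h where "h = pi * real m / (4 * real N - 2)"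
  define th where "th = pi * real m / (2 * real N - 1)"
  have th: "th = 2 * h" unfolding h_def th_def using N by (simp add: field_simps)
  have s: "sin h \<noteq> 0" using sin_h_nz[OF N m] unfolding h_def .
  have "sin (real (n+1) * th) - 2 * sin (real n * th) + sin (real (n-1) * th)
      = sin (real n * th) * (2 * cos th - 2)"
    using n by (simp add: of_nat_diff algebra_simps sin_add sin_diff)
  also have "2 * cos th - 2 = -4 * (sin h)\<^sup>2" unfolding th cos_double_sin by simp
  finally have key: "sin (real (n+1) * th) - 2 * sin (real n * th) + sin (real (n-1) * th)
      = -4 * (sin h)\<^sup>2 * sin (real n * th)" by simp
  have "chain_gamma m N (n+1) - 2 * chain_gamma m N n + chain_gamma m N (n-1)
     = (1 / (sin h)\<^sup>2 * sin (pi * real m / 2) * cos h) *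
       (sin (real (n+1) * th) - 2 * sin (real n * th) + sin (real (n-1) * th))"
    unfolding gamma_eq h_def[symmetric] th_def[symmetric] using s by (simp add: field_simps)
  also have "\<dots> = -4 * (sin (pi * real m / 2) * cos h * sin (real n * th))"
    unfolding key using s by (simp add: field_simps)
  finally show ?thesis unfolding h_def th_def by (simp add: algebra_simps)
qed

lemma gamma_bound:
  assumes N: "N \<ge> 2"
  shows "chain_gamma m N N = chain_gamma m N (N-1)"
proof (cases "even m")
  case True
  then obtain k where k: "m = 2*k" by auto
  have "sin (pi * real m / 2) = 0" unfolding k by (simp add: sin_npi mult.commute)
  then show ?thesis unfolding chain_gamma_def by simp
next
  case False
  define th where "th = pi * real m / (2 * real N - 1)"
  have "real N * th = pi * real m - real (N-1) * th"
    unfolding th_def using N by (simp add: of_nat_diff field_simps)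
  then have "sin (real N * th) = sin (real (N-1) * th)"
    using False by (simp add: sin_diff sin_npi cos_npi mult.commute)
  then show ?thesis unfolding gamma_eq th_def[symmetric] by simp
qed

definition SS :: "nat \<Rightarrow> nat \<Rightarrow> real" where
  "SS N n = (\<Sum>m=1..2*N-2. chain_gamma m N n)"

lemma SS_val:
  assumes N: "N \<ge> 2" and n: "n \<le> N - 1"
  shows "SS N n = real n * (2 * real N - 1)"
proof -
  define D where "D k = SS N (k+1) - SS N k" for k
  have rec: "D k - D (k-1) = -4 * TT N k" if "1 \<le> k" for k
  proof -
    have "D k - D (k-1) = SS N (k+1) - 2 * SS N k + SS N (k-1)"
      unfolding D_def using that by simp
    also have "\<dots> = (\<Sum>m=1..2*N-2. chain_gamma m N (k+1) - 2 * chain_gamma m N k + chain_gamma m N (k-1))"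
      unfolding SS_def by (simp add: sum.distrib sum_subtractf sum_distrib_left)
    also have "\<dots> = (\<Sum>m=1..2*N-2. -4 * (sin (pi * real m / 2) * cos (pi * real m / (4 * real N - 2))
       * sin (pi * real k * real m / (2 * real N - 1))))"
      using N that by (intro sum.cong refl gamma_rec) auto
    also have "\<dots> = -4 * TT N k" unfolding TT_def by (simp add: sum_distrib_left)
    finally show ?thesis .
  qed
  have Dconst: "k \<le> N - 2 \<Longrightarrow> D k = D 0" for k
  proof (induction k)
    case 0 then show ?case by simp
  next
    case (Suc k)
    have "D (Suc k) - D k = 0" using rec[of "Suc k"] TT_mid[OF N, of "Suc k"] Suc.prems by simp
    then show ?case using Suc by simp
  qed
  have "D (N-1) = 0" unfolding D_def using gamma_bound[OF N] N by (simp add: SS_def)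
  moreover have "D (N-1) - D (N-2) = - (2 * real N - 1)"
    using rec[of "N-1"] TT_last[OF N] N by (simp add: numeral_2_eq_2)
  ultimately have D0: "D 0 = 2 * real N - 1" using Dconst[of "N-2"] by simp
  have S0: "SS N 0 = 0" unfolding SS_def chain_gamma_def by simp
  have "k \<le> N - 1 \<Longrightarrow> SS N k = real k * (2 * real N - 1)" for k
  proof (induction k)
    case 0 then show ?case using S0 by simp
  next
    case (Suc k)
    have "SS N (Suc k) = SS N k + D k" unfolding D_def by simp
    then show ?case using Suc Dconst[of k] D0 by (simp add: algebra_simps)
  qed
  then show ?thesis using n .
qed



lemma energy_ident:
  fixes e w :: "nat \<Rightarrow> real"
  assumes "w 0 = 0"
  shows "(\<Sum>k=1..K. w k * (e (k-1) - 2 * e k + e (k+1))) + (\<Sum>k=1..K. (e k - e (k-1)) * (w k - w (k-1)))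
     = w K * (e (K+1) - e K)"
proof (induction K)
  case 0 then show ?case using assms by simp
next
  case (Suc K)
  then show ?case by (simp add: algebra_simps)
qed

lemma gamma_rec2:
  assumes N: "N \<ge> 2" and m: "1 \<le> m" "m \<le> 2*N-2" and n: "1 \<le> n"
  shows "chain_gamma m N (n+1) - 2 * chain_gamma m N n + chain_gamma m N (n-1)
    = -4 * (sin (pi * real m / (4 * real N - 2)))\<^sup>2 * chain_gamma m N n"
  using gamma_rec[OF assms] sin_h_nz[OF N m] unfolding chain_gamma_def
  by (simp add: field_simps)

lemma omega_sq: "(chain_omega w N m)\<^sup>2 = 4 * w\<^sup>2 * (sin (pi * real m / (4 * real N - 2)))\<^sup>2"
  unfolding chain_omega_def by (simp add: power_mult_distrib)



theorem lemma2:
  fixes N :: nat and \<omega>\<^sub>0 f\<^sub>0 \<sigma> :: real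
    and x v :: "nat \<Rightarrow> real \<Rightarrow> real"
  assumes N: "N \<ge> 2"
    and w0: "\<omega>\<^sub>0 > 0" and f0: "f\<^sub>0 > 0"
    and sigma: "\<sigma> = f\<^sub>0 / \<omega>\<^sub>0\<^sup>2"
    and dx: "\<And>k t. k < N \<Longrightarrow> t \<ge> 0 \<Longrightarrow>
               (x k has_real_derivative v k t) (at t within {0..})"
    and dv0: "\<And>t. t \<ge> 0 \<Longrightarrow> (v 0 has_real_derivative 0) (at t within {0..})"
    and dvk: "\<And>k t. 1 \<le> k \<Longrightarrow> k \<le> N - 2 \<Longrightarrow> t \<ge> 0 \<Longrightarrow>
               (v k has_real_derivative
                  \<omega>\<^sub>0\<^sup>2 * (x (k - 1) t - 2 * x k t + x (k + 1) t)) (at t within {0..})"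
    and dvN: "\<And>t. t \<ge> 0 \<Longrightarrow>
               (v (N - 1) has_real_derivative
                  \<omega>\<^sub>0\<^sup>2 * (x (N - 2) t - x (N - 1) t) + f\<^sub>0) (at t within {0..})"
    and x0: "\<And>k. k < N \<Longrightarrow> x k 0 = 0"
    and v0: "\<And>k. k < N \<Longrightarrow> v k 0 = 0"
  shows "\<forall>n < N. \<forall>t \<ge> 0.
           x n t = \<sigma> * (real n - 1 / (2 * real N - 1) *
             (\<Sum>m = 1..2 * N - 2. chain_gamma m N n * cos (chain_omega \<omega>\<^sub>0 N m * t)))"
proof -
  define I where "I = {1..2*N-2}"
  define c where "c = 1 / (2 * real N - 1)"
  define om where "om m = chain_omega \<omega>\<^sub>0 N m" for m
  define y where "y n t = \<sigma> * (real n - c * (\<Sum>m\<in>I. chain_gamma m N n * cos (om m * t)))" for n t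
  define yv where "yv n t = \<sigma> * c * (\<Sum>m\<in>I. chain_gamma m N n * om m * sin (om m * t))" for n t
  define ya where "ya n t = \<sigma> * c * (\<Sum>m\<in>I. chain_gamma m N n * (om m)\<^sup>2 * cos (om m * t))" for n t
  have Npos: "2 * real N - 1 > 0" using N by simp
  have dy: "(y n has_real_derivative yv n t) (at t within S)" for n t S
    unfolding y_def yv_def
    by (rule derivative_eq_intros refl | simp add: sum_negf[symmetric] sum_distrib_left algebra_simps)+
  have dyv: "(yv n has_real_derivative ya n t) (at t within S)" for n t S
    unfolding yv_def ya_def
    by (rule derivative_eq_intros refl | simp add: power2_eq_square algebra_simps)+
  have ya_rec: "ya k t = \<omega>\<^sub>0\<^sup>2 * (y (k-1) t - 2 * y k t + y (k+1) t)" if k: "1 \<le> k" for k t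
  proof -
    define Sy where "Sy n = (\<Sum>m\<in>I. chain_gamma m N n * cos (om m * t))" for n
    have ysy: "y n t = \<sigma> * (real n - c * Sy n)" for n unfolding y_def Sy_def ..
    have "Sy (k+1) - 2 * Sy k + Sy (k-1) =
       (\<Sum>m\<in>I. (chain_gamma m N (k+1) - 2 * chain_gamma m N k + chain_gamma m N (k-1)) * cos (om m * t))"
      unfolding Sy_def by (simp add: sum.distrib sum_subtractf sum_distrib_left algebra_simps)
    moreover have "y (k-1) t - 2 * y k t + y (k+1) t = - \<sigma> * c * (Sy (k+1) - 2 * Sy k + Sy (k-1))"
      unfolding ysy using k by (simp add: of_nat_diff algebra_simps)
    ultimately have "y (k-1) t - 2 * y k t + y (k+1) t = - \<sigma> * c *
       (\<Sum>m\<in>I. (chain_gamma m N (k+1) - 2 * chain_gamma m N k + chain_gamma m N (k-1)) * cos (om m * t))"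
      by simp
    also have "\<dots> = - \<sigma> * c * (\<Sum>m\<in>I. (-4 * (sin (pi * real m / (4 * real N - 2)))\<^sup>2 * chain_gamma m N k) * cos (om m * t))"
      using gamma_rec2[OF N _ _ k] unfolding I_def by (intro arg_cong[where f="\<lambda>z. - \<sigma> * c * z"] sum.cong) auto
    finally show ?thesis unfolding ya_def om_def omega_sq
      by (simp add: sum_distrib_left algebra_simps)
  qed
  have yN: "y N t = y (N-1) t + \<sigma>" for t
    unfolding y_def using gamma_bound[OF N] N by (simp add: of_nat_diff algebra_simps)
  have ya0: "ya 0 t = 0" for t unfolding ya_def chain_gamma_def by simp
  have yv_0: "yv n 0 = 0" for n unfolding yv_def by simp
  have y_0: "y n 0 = 0" if "n \<le> N - 1" for n
  proof -
    have "(\<Sum>m\<in>I. chain_gamma m N n * cos (om m * 0)) = SS N n" unfolding SS_def I_def by simp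
    then show ?thesis unfolding y_def using SS_val[OF N that] Npos by (simp add: c_def)
  qed
  define e where "e k t = x (min k (N-1)) t - y (min k (N-1)) t" for k t
  define w where "w k t = v (min k (N-1)) t - yv (min k (N-1)) t" for k t
  have F1: "(e k has_real_derivative w k t) (at t within {0..})" if "t \<ge> 0" for k t
  proof -
    have "min k (N-1) < N" using N by simp
    from DERIV_diff[OF dx[OF this that] dy]
    show ?thesis unfolding e_def w_def .
  qed
  have F2: "(w 0 has_real_derivative 0) (at t within {0..})" if "t \<ge> 0" for t
  proof -
    from DERIV_diff[OF dv0[OF that] dyv[of 0 t "{0..}"]]
    show ?thesis unfolding w_def using ya0 by simp
  qed
  have F3: "(w k has_real_derivative \<omega>\<^sub>0\<^sup>2 * (e (k-1) t - 2 * e k t + e (k+1) t)) (at t within {0..})"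
    if k: "1 \<le> k" "k \<le> N - 1" and t: "t \<ge> 0" for k t
  proof (cases "k \<le> N - 2")
    case True
    have m: "min k (N-1) = k" "min (k-1) (N-1) = k-1" "min (k+1) (N-1) = k+1" using True k N by auto
    have d: "(w k has_real_derivative (\<omega>\<^sub>0\<^sup>2 * (x (k - 1) t - 2 * x k t + x (k + 1) t) - ya k t)) (at t within {0..})"
      using DERIV_diff[OF dvk[OF k(1) True t] dyv[of k t "{0..}"]] unfolding w_def m .
    have eq: "\<omega>\<^sub>0\<^sup>2 * (x (k - 1) t - 2 * x k t + x (k + 1) t) - ya k t
       = \<omega>\<^sub>0\<^sup>2 * (e (k-1) t - 2 * e k t + e (k+1) t)"
      unfolding e_def m ya_rec[OF k(1)] by (simp add: algebra_simps)
    show ?thesis using d unfolding eq .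
  next
    case False
    then have kk: "k = N - 1" using k by simp
    have m: "min k (N-1) = N-1" "min (k-1) (N-1) = N-2" "min (k+1) (N-1) = N-1" using kk N by auto
    have "ya (N-1) t = \<omega>\<^sub>0\<^sup>2 * (y (N-2) t - y (N-1) t) + f\<^sub>0"
      using ya_rec[of "N-1" t] N yN[of t] sigma w0
      by (simp add: numeral_2_eq_2 algebra_simps)
    moreover have d: "(w k has_real_derivative (\<omega>\<^sub>0\<^sup>2 * (x (N - 2) t - x (N - 1) t) + f\<^sub>0 - ya (N-1) t)) (at t within {0..})"
      using DERIV_diff[OF dvN[OF t] dyv[of "N-1" t "{0..}"]] unfolding w_def kk by simp
    ultimately have eq: "\<omega>\<^sub>0\<^sup>2 * (x (N - 2) t - x (N - 1) t) + f\<^sub>0 - ya (N-1) t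
       = \<omega>\<^sub>0\<^sup>2 * (e (k-1) t - 2 * e k t + e (k+1) t)"
      unfolding e_def m by (simp add: algebra_simps)
    show ?thesis using d unfolding eq .
  qed
  have e0: "e k 0 = 0" for k
    unfolding e_def using x0[of "min k (N-1)"] y_0[of "min k (N-1)"] N by simp
  have w_0: "w k 0 = 0" for k
    unfolding w_def using v0[of "min k (N-1)"] yv_0 N by simp
  have conv: "convex {0::real..}" by (simp add: convex_real_interval)
  have w0z: "w 0 t = 0" if "t \<ge> 0" for t
  proof -
    obtain C where "\<forall>s\<in>{0::real..}. w 0 s = C"
      using has_field_derivative_zero_constant[OF conv, of "w 0"] F2 by auto
    then show ?thesis using w_0[of 0] that by force
  qed
  have e0z: "e 0 t = 0" if "t \<ge> 0" for t
  proof -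
    have "(e 0 has_real_derivative 0) (at s within {0..})" if "s \<ge> 0" for s using F1[OF that, of 0] w0z[OF that] by simp
    then obtain C where "\<forall>s\<in>{0::real..}. e 0 s = C"
      using has_field_derivative_zero_constant[OF conv, of "e 0"] by auto
    then show ?thesis using e0[of 0] that by force
  qed
  define J where "J = {1..N-1}"
  define E where "E t = (\<Sum>k\<in>J. (w k t)\<^sup>2) + \<omega>\<^sub>0\<^sup>2 * (\<Sum>k\<in>J. (e k t - e (k-1) t)\<^sup>2)" for t
  have dE: "(E has_real_derivative 0) (at t within {0..})" if t: "t \<ge> 0" for t
  proof -
    define W where "W k = \<omega>\<^sub>0\<^sup>2 * (e (k-1) t - 2 * e k t + e (k+1) t)" for k
    have d1: "((\<lambda>s. (w k s)\<^sup>2) has_real_derivative 2 * w k t * W k) (at t within {0..})" if "k \<in> J" for k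
      using DERIV_power[OF F3[of k t], of 2] that t unfolding J_def W_def by (simp add: algebra_simps)
    have d2: "((\<lambda>s. (e k s - e (k-1) s)\<^sup>2) has_real_derivative
        2 * (e k t - e (k-1) t) * (w k t - w (k-1) t)) (at t within {0..})" for k
      using DERIV_power[OF DERIV_diff[OF F1[OF t, of k] F1[OF t, of "k-1"]], of 2]
      by (simp add: algebra_simps)
    have "(E has_real_derivative (\<Sum>k\<in>J. 2 * w k t * W k) +
        \<omega>\<^sub>0\<^sup>2 * (\<Sum>k\<in>J. 2 * (e k t - e (k-1) t) * (w k t - w (k-1) t))) (at t within {0..})"
      unfolding E_def by (intro DERIV_add DERIV_cmult DERIV_sum d1 d2)
    moreover have "(\<Sum>k\<in>J. 2 * w k t * W k) +
        \<omega>\<^sub>0\<^sup>2 * (\<Sum>k\<in>J. 2 * (e k t - e (k-1) t) * (w k t - w (k-1) t))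
      = 2 * \<omega>\<^sub>0\<^sup>2 * ((\<Sum>k=1..N-1. w k t * (e (k-1) t - 2 * e k t + e (k+1) t))
          + (\<Sum>k=1..N-1. (e k t - e (k-1) t) * (w k t - w (k-1) t)))"
      unfolding J_def W_def by (simp add: sum_distrib_left algebra_simps)
    moreover have "(\<Sum>k=1..N-1. w k t * (e (k-1) t - 2 * e k t + e (k+1) t))
          + (\<Sum>k=1..N-1. (e k t - e (k-1) t) * (w k t - w (k-1) t)) = w (N-1) t * (e (N-1+1) t - e (N-1) t)"
      using energy_ident[of "\<lambda>k. w k t" "\<lambda>k. e k t" "N-1"] w0z[OF t] by simp
    moreover have "e (N-1+1) t = e (N-1) t" unfolding e_def by simp
    ultimately show ?thesis by simp
  qed
  have E0: "E t = 0" if "t \<ge> 0" for t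
  proof -
    obtain C where "\<forall>s\<in>{0::real..}. E s = C"
      using has_field_derivative_zero_constant[OF conv, of E] dE by auto
    moreover have "E 0 = 0" unfolding E_def using e0 w_0 by simp
    ultimately show ?thesis using that by force
  qed
  have diff0: "e k t = e (k-1) t" if "t \<ge> 0" "k \<in> J" for k t
  proof -
    have nn1: "(\<Sum>k\<in>J. (w k t)\<^sup>2) \<ge> 0" by (simp add: sum_nonneg)
    have nn2: "(\<Sum>k\<in>J. (e k t - e (k-1) t)\<^sup>2) \<ge> 0" by (simp add: sum_nonneg)
    have "\<omega>\<^sub>0\<^sup>2 * (\<Sum>k\<in>J. (e k t - e (k-1) t)\<^sup>2) = 0"
      using E0[OF that(1)] nn1 nn2 w0 unfolding E_def
      by (smt (verit) mult_nonneg_nonneg zero_le_power2)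
    then have "(\<Sum>k\<in>J. (e k t - e (k-1) t)\<^sup>2) = 0" using w0 by simp
    then have "(e k t - e (k-1) t)\<^sup>2 = 0"
      using sum_nonneg_eq_0_iff[of J "\<lambda>k. (e k t - e (k-1) t)\<^sup>2"] that(2) unfolding J_def by simp
    then show ?thesis by simp
  qed
  have ez: "e k t = 0" if "t \<ge> 0" "k \<le> N - 1" for k t
    using that(2)
  proof (induction k)
    case 0 then show ?case using e0z[OF that(1)] by simp
  next
    case (Suc k)
    then show ?case using diff0[OF that(1), of "Suc k"] unfolding J_def by simp
  qed
  show ?thesis
  proof (intro allI impI)
    fix n t assume n: "n < N" and t: "(t::real) \<ge> 0"
    have "e n t = 0" using ez[OF t, of n] n by simp
    then have "x n t = y n t" unfolding e_def using n by simp
    then show "x n t = \<sigma> * (real n - 1 / (2 * real N - 1) *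
             (\<Sum>m = 1..2 * N - 2. chain_gamma m N n * cos (chain_omega \<omega>\<^sub>0 N m * t)))"
      unfolding y_def c_def I_def om_def .
  qed
qed

end
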